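(* Let $n\ge 3$. A permutation $\pi=(\pi_1,\ldots,\pi_n)$ of $\{1,\ldots,n\}$ is convex, i.e. satisfies $\pi_2-\pi_1\le\pi_3-\pi_2\le\cdots\le\pi_n-\pi_{n-1}$, if and only if $\pi$ is one of the following permutations or the reverse $(\pi_n,\ldots,\pi_1)$ of one of them: (i) $(1,2,\ldots,n)$; (ii) $(n,1,2,\ldots,n-1)$; (iii) $(n-1,1,2,\ldots,n-2,n)$; (iv) $\Pi^*_n$.
   Context: $\Pi^*_n$ is the permutation whose matrix is obtained by rotating the permutation matrix of $\pi_{(n)}$ counter-clockwise by $90$ degrees, where $\pi_{(n)}=(p,p+1,p-1,p+2,\ldots,1,2p)$ if $n=2p$ and $\pi_{(n)}=(p+1,p+2,p,p+3,\ldots,2p+1,1)$ if $n=2p+1$ (permutation matrices have $1$ in positions $(i,\pi_i)$). Explicitly, $\Pi^*_n$ lists the even numbers of $\{1,\ldots,n\}$ in decreasing order followed by the odd numbers in increasing order: $\Pi^*_n=(n,n-2,\ldots,2,1,3,\ldots,n-1)$ for $n$ even and $\Pi^*_n=(n-1,n-3,\ldots,2,1,3,\ldots,n)$ for $n$ odd. *)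

theory Defs
  imports "HOL-Combinatorics.Multiset_Permutations"
begin

text \<open>A permutation of {1..n} is a list (pi_1,...,pi_n) in permutations_of_set {1..n}.
  List index i corresponds to pi_(i+1).\<close>

definition convex_perm :: "nat list \<Rightarrow> bool" where
  "convex_perm xs \<longleftrightarrow>
     (\<forall>i. i + 2 < length xs \<longrightarrow>
        int (xs ! (i+1)) - int (xs ! i) \<le> int (xs ! (i+2)) - int (xs ! (i+1)))"

definition Pi_star :: "nat \<Rightarrow> nat list" where
  "Pi_star n = rev (filter even [1..<n+1]) @ filter odd [1..<n+1]"

definition perm_i :: "nat \<Rightarrow> nat list" where
  "perm_i n = [1..<n+1]"

definition perm_ii :: "nat \<Rightarrow> nat list" where
  "perm_ii n = n # [1..<n]"

definition perm_iii :: "nat \<Rightarrow> nat list" where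
  "perm_iii n = (n - 1) # [1..<n-1] @ [n]"

end

theory Submission
  imports Defs
begin

lemma convex_Cons:
  "convex_perm (x # xs) \<longleftrightarrow> convex_perm xs \<and>
     (2 \<le> length xs \<longrightarrow> int (xs!0) - int x \<le> int (xs!1) - int (xs!0))"
proof
  assume H: "convex_perm (x # xs)"
  have "convex_perm xs" unfolding convex_perm_def
  proof (intro allI impI)
    fix i assume "i + 2 < length xs"
    then show "int (xs ! (i+1)) - int (xs ! i) \<le> int (xs ! (i+2)) - int (xs ! (i+1))"
      using H[unfolded convex_perm_def, rule_format, of "Suc i"] by simp
  qed
  moreover have "2 \<le> length xs \<longrightarrow> int (xs!0) - int x \<le> int (xs!1) - int (xs!0)"
    using H[unfolded convex_perm_def, rule_format, of 0] by (simp add: numeral_2_eq_2)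
  ultimately show "convex_perm xs \<and> (2 \<le> length xs \<longrightarrow> int (xs!0) - int x \<le> int (xs!1) - int (xs!0))" by blast
next
  assume H: "convex_perm xs \<and> (2 \<le> length xs \<longrightarrow> int (xs!0) - int x \<le> int (xs!1) - int (xs!0))"
  show "convex_perm (x # xs)" unfolding convex_perm_def
  proof (intro allI impI)
    fix i assume i: "i + 2 < length (x # xs)"
    show "int ((x#xs) ! (i+1)) - int ((x#xs) ! i) \<le> int ((x#xs) ! (i+2)) - int ((x#xs) ! (i+1))"
    proof (cases i)
      case 0 then show ?thesis using H i by (simp add: numeral_2_eq_2)
    next
      case (Suc j) then show ?thesis using H[THEN conjunct1, unfolded convex_perm_def, rule_format, of j] i
        by (simp add: numeral_2_eq_2)
    qed
  qed
qed

lemma convex_rev1: "convex_perm xs \<Longrightarrow> convex_perm (rev xs)"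
  unfolding convex_perm_def
proof (intro allI impI)
  fix i assume H: "\<forall>i. i + 2 < length xs \<longrightarrow> int (xs ! (i + 1)) - int (xs ! i) \<le> int (xs ! (i + 2)) - int (xs ! (i + 1))"
    and i: "i + 2 < length (rev xs)"
  define j where "j = length xs - 3 - i"
  have a: "rev xs ! i = xs ! (j+2)" "rev xs ! (i+1) = xs ! (j+1)" "rev xs ! (i+2) = xs ! j"
    using i by (auto simp: rev_nth j_def intro!: arg_cong[where f="(!) xs"])
  have "j + 2 < length xs" using i by (simp add: j_def)
  then show "int (rev xs ! (i + 1)) - int (rev xs ! i) \<le> int (rev xs ! (i + 2)) - int (rev xs ! (i + 1))"
    using H[rule_format, of j] unfolding a by simp
qed

lemma convex_rev: "convex_perm (rev xs) \<longleftrightarrow> convex_perm xs"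
  using convex_rev1[of xs] convex_rev1[of "rev xs"] by auto

lemma convex_by_nth:
  assumes "length xs = n" "\<And>i. i < n \<Longrightarrow> int (xs!i) = f i"
    "\<And>i. i + 2 < n \<Longrightarrow> f (i+1) - f i \<le> f (i+2) - f (i+1)"
  shows "convex_perm xs"
  unfolding convex_perm_def using assms by auto

lemma PS1: "even n \<Longrightarrow> Pi_star (Suc n) = Pi_star n @ [Suc n]"
  by (simp add: Pi_star_def)
lemma PS2: "odd n \<Longrightarrow> Pi_star (Suc n) = Suc n # Pi_star n"
  by (simp add: Pi_star_def)

lemma Pi_star_nth:
  "length (Pi_star n) = n \<and> (\<forall>i<n. Pi_star n ! i = (if i < n div 2 then 2*(n div 2 - i) else 2*(i - n div 2)+1))"
proof (induction n)
  case 0 then show ?case by (simp add: Pi_star_def)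
next
  case (Suc n)
  show ?case
  proof (cases "even n")
    case True
    then show ?thesis using Suc by (auto simp: PS1 nth_append elim!: evenE)
  next
    case False
    then show ?thesis using Suc by (auto simp: PS2 nth_Cons split: nat.splits elim!: oddE)
  qed
qed

lemma perm_i_nth: "length (perm_i n) = n" "i < n \<Longrightarrow> perm_i n ! i = Suc i"
  unfolding perm_i_def by (simp_all del: upt_Suc)
lemma perm_ii_nth: "1 \<le> n \<Longrightarrow> length (perm_ii n) = n" "i < n \<Longrightarrow> perm_ii n ! i = (if i = 0 then n else i)"
  by (auto simp: perm_ii_def nth_Cons split: nat.splits)
lemma perm_iii_nth: "2 \<le> n \<Longrightarrow> length (perm_iii n) = n"
   "2 \<le> n \<Longrightarrow> i < n \<Longrightarrow> perm_iii n ! i = (if i = 0 then n - 1 else if i < n - 1 then i else n)"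
  by (auto simp: perm_iii_def nth_Cons nth_append split: nat.splits)

lemma conv_i: "convex_perm (perm_i n)"
  by (rule convex_by_nth[where f="\<lambda>i. int i + 1"]) (auto simp: perm_i_nth)
lemma conv_ii: "1 \<le> n \<Longrightarrow> convex_perm (perm_ii n)"
  by (rule convex_by_nth[where f="\<lambda>i. if i = 0 then int n else int i"]) (auto simp: perm_ii_nth)
lemma conv_iii: "2 \<le> n \<Longrightarrow> convex_perm (perm_iii n)"
  by (rule convex_by_nth[where f="\<lambda>i. if i = 0 then int n - 1 else if i < n - 1 then int i else int n"]) (auto simp: perm_iii_nth)
lemma conv_Pi: "convex_perm (Pi_star n)"
  by (rule convex_by_nth[where f="\<lambda>i. if i < n div 2 then 2*(int (n div 2) - int i) else 2*(int i - int (n div 2))+1"]) (auto simp: Pi_star_nth)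


definition C4 :: "nat \<Rightarrow> nat list set" where
  "C4 n = {perm_i n, perm_ii n, perm_iii n, Pi_star n}"
definition CC :: "nat \<Rightarrow> nat list set" where
  "CC n = C4 n \<union> rev ` C4 n"

lemma CC_rev: "q \<in> CC n \<Longrightarrow> rev q \<in> CC n"
  unfolding CC_def by (auto simp: image_iff)

lemma max_end:
  assumes p: "p \<in> permutations_of_set {1..N}" and c: "convex_perm p" and N: "1 \<le> N"
  shows "p ! 0 = N \<or> p ! (N - 1) = N"
proof (rule ccontr)
  assume H: "\<not> (p ! 0 = N \<or> p ! (N - 1) = N)"
  have sp: "set p = {1..N}" and dp: "distinct p" using p by (auto simp: permutations_of_set_def)
  have lp: "length p = N" using distinct_card[OF dp] sp by simp
  have "N \<in> set p" using sp N by auto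
  then obtain k where k: "k < N" "p ! k = N" using lp by (auto simp: in_set_conv_nth)
  have k0: "k \<noteq> 0" proof assume "k = 0" then show False using H k(2) by simp qed
  have k1: "k \<noteq> N - 1" proof assume "k = N - 1" then show False using H k(2) by simp qed
  have le: "\<And>j. j < N \<Longrightarrow> p ! j \<le> N" using sp lp nth_mem by fastforce
  have ne: "\<And>j. j < N \<Longrightarrow> j \<noteq> k \<Longrightarrow> p ! j \<noteq> N"
    using dp lp k by (metis nth_eq_iff_index_eq)
  have a: "p ! (k - 1) < N" using le[of "k-1"] ne[of "k-1"] k k0 by fastforce
  have b: "p ! (k + 1) < N" using le[of "k+1"] ne[of "k+1"] k k1 by fastforce
  have "int (p ! (k - 1 + 1)) - int (p ! (k-1)) \<le> int (p ! (k - 1 + 2)) - int (p ! (k - 1 + 1))"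
    using c[unfolded convex_perm_def, rule_format, of "k-1"] k k0 k1 lp by auto
  moreover have "k - 1 + 1 = k" "k - 1 + 2 = k + 1" using k0 by auto
  ultimately show False using a b k by simp
qed

lemma vals3: "perm_i 3 = [1,2,3]" "perm_ii 3 = [3,1,2]" "perm_iii 3 = [2,1,3]" "Pi_star 3 = [2,1,3]"
  by (simp_all add: perm_i_def perm_ii_def perm_iii_def Pi_star_def upt_rec)

lemma mem_CC3: "[1,2,3] \<in> CC 3" "[3,1,2] \<in> CC 3" "[2,1,3] \<in> CC 3" "[3,2,1] \<in> CC 3"
proof -
  have a: "C4 3 \<subseteq> CC 3" "rev ` C4 3 \<subseteq> CC 3" unfolding CC_def by auto
  have b: "[1,2,3] \<in> C4 3" "[3,1,2] \<in> C4 3" "[2,1,3] \<in> C4 3"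
    unfolding C4_def vals3 by simp_all
  have "[3,2,1] = rev [1,2,3::nat]" by simp
  then have "[3,2,1] \<in> rev ` C4 3" using b(1) by blast
  then show "[1,2,3] \<in> CC 3" "[3,1,2] \<in> CC 3" "[2,1,3] \<in> CC 3" "[3,2,1] \<in> CC 3"
    using a b by blast+
qed

lemma base3:
  assumes "p \<in> permutations_of_set {1..3::nat}" "convex_perm p"
  shows "p \<in> CC 3"
proof -
  have sp: "set p = {1..3}" and dp: "distinct p" using assms by (auto simp: permutations_of_set_def)
  have lp: "length p = 3" using distinct_card[OF dp] sp by simp
  then obtain a b c where p: "p = [a,b,c]" by (auto simp: length_Suc_conv numeral_3_eq_3)
  have e: "{1..3::nat} = {1,2,3}" by auto
  have "set [a,b,c] = {1,2,3}" using sp p e by simp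
  then have ab: "a = 1 \<or> a = 2 \<or> a = 3" "b = 1 \<or> b = 2 \<or> b = 3" "c = 1 \<or> c = 2 \<or> c = 3"
    by auto
  have dd: "distinct [a,b,c]" using dp p by simp
  have "p=[1,2,3] \<or> p=[1,3,2] \<or> p=[2,1,3] \<or> p=[2,3,1] \<or> p=[3,1,2] \<or> p=[3,2,1]"
    using ab dd unfolding p by (elim disjE) simp_all
  then consider "p=[1,2,3]" | "p=[1,3,2]" | "p=[2,1,3]" | "p=[2,3,1]" | "p=[3,1,2]" | "p=[3,2,1]"
    by blast
  then show ?thesis
  proof cases
    case 2 then show ?thesis using assms(2) by (simp add: convex_Cons)
  next
    case 4 then show ?thesis using assms(2) by (simp add: convex_Cons)
  qed (simp_all only: mem_CC3)
qed

lemma vals4a: "perm_iii 4 = [3,1,2,4]"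
proof -
  have "[1..<3] = [1,2::nat]" by (simp add: upt_rec)
  then show ?thesis by (simp add: perm_iii_def)
qed
lemma vals4b: "Pi_star 4 = [4,2,1,3]"
proof -
  have "Pi_star (Suc 3) = Suc 3 # Pi_star 3" by (rule PS2) simp
  then show ?thesis by (simp add: vals3)
qed
lemma vals5: "Pi_star 5 = [4,2,1,3,5]"
proof -
  have "Pi_star (Suc 4) = Pi_star 4 @ [Suc 4]" by (rule PS1) simp
  then show ?thesis by (simp add: vals4b)
qed
lemmas vals45 = vals4a vals4b vals5

lemma step_front:
  assumes n: "3 \<le> n" and q: "q \<in> CC n" and lq: "length q = n"
    and c: "int (q!0) - int (Suc n) \<le> int (q!1) - int (q!0)"
  shows "Suc n # q \<in> CC (Suc n)"
proof -
  have n1: "n - 1 < n" "n - 2 < n" using n by auto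
  from q consider "q = perm_i n" | "q = perm_ii n" | "q = perm_iii n" | "q = Pi_star n"
    | "q = rev (perm_i n)" | "q = rev (perm_ii n)" | "q = rev (perm_iii n)" | "q = rev (Pi_star n)"
    unfolding CC_def C4_def by blast
  then show ?thesis
  proof cases
    case 1
    have "Suc n # q = perm_ii (Suc n)" using 1 by (simp add: perm_i_def perm_ii_def)
    then show ?thesis by (simp add: CC_def C4_def)
  next
    case 2
    then show ?thesis using c n by (simp add: perm_ii_nth)
  next
    case 3
    have "q!0 = n - 1" "q!1 = 1" using 3 n by (simp_all add: perm_iii_nth)
    then have "n = 3 \<or> n = 4" using c n by (simp, arith)
    then show ?thesis
    proof
      assume "n = 3"
      then have "Suc n # q = Pi_star 4" using 3 by (simp add: vals3 vals45)
      then show ?thesis using \<open>n = 3\<close> by (simp add: CC_def C4_def)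
    next
      assume "n = 4"
      then have "Suc n # q = rev (Pi_star 5)" using 3 by (simp add: vals3 vals45)
      then show ?thesis using \<open>n = 4\<close> by (simp add: CC_def C4_def)
    qed
  next
    case 4
    show ?thesis
    proof (cases "even n")
      case True
      then obtain h where h: "n = 2*h" by blast
      have "n div 2 = h" using h by simp
      have "Pi_star n ! 0 = n" "Pi_star n ! 1 = n - 2"
        using n h Pi_star_nth[of n] \<open>n div 2 = h\<close> by auto
      then have "q!0 = n" "q!1 = n - 2" using 4 by simp_all
      then show ?thesis using c n by simp
    next
      case False
      then have "Suc n # q = Pi_star (Suc n)" using 4 by (simp add: PS2)
      then show ?thesis by (simp add: CC_def C4_def)
    qed
  next
    case 5
    have "Suc n # q = rev (perm_i (Suc n))" using 5 by (simp add: perm_i_def)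
    then show ?thesis by (simp add: CC_def C4_def)
  next
    case 6
    have "Suc n # q = rev (perm_iii (Suc n))" using 6 by (simp add: perm_ii_def perm_iii_def)
    then show ?thesis by (simp add: CC_def C4_def)
  next
    case 7
    have L: "length (perm_iii n) = n" using n by (simp add: perm_iii_nth)
    have "q!0 = perm_iii n ! (n - 1)" "q!1 = perm_iii n ! (n - 2)" using 7 L n
      by (simp_all add: rev_nth numeral_2_eq_2)
    moreover have "perm_iii n ! (n - 1) = n" "perm_iii n ! (n - 2) = n - 2"
      using n n1 by (simp_all add: perm_iii_nth)
    ultimately have "q!0 = n" "q!1 = n - 2" by simp_all
    then show ?thesis using c n by simp
  next
    case 8
    show ?thesis
    proof (cases "even n")
      case True
      then have "Suc n # q = rev (Pi_star (Suc n))" using 8 by (simp add: PS1)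
      then show ?thesis by (simp add: CC_def C4_def)
    next
      case False
      then obtain h where h: "n = 2*h+1" by (metis oddE)
      have L: "length (Pi_star n) = n" by (simp add: Pi_star_nth)
      have "q!0 = Pi_star n ! (n - 1)" "q!1 = Pi_star n ! (n - 2)" using 8 L n
        by (simp_all add: rev_nth numeral_2_eq_2)
      moreover have "n div 2 = h" using h by simp
      moreover have "Pi_star n ! (n - 1) = n" "Pi_star n ! (n - 2) = n - 2"
        using n n1 h Pi_star_nth[of n] \<open>n div 2 = h\<close> by auto
      ultimately have "q!0 = n" "q!1 = n - 2" by simp_all
      then show ?thesis using c n by simp
    qed
  qed
qed


lemma fwd:
  "3 \<le> n \<Longrightarrow> p \<in> permutations_of_set {1..n} \<Longrightarrow> convex_perm p \<Longrightarrow> p \<in> CC n"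
proof (induction n arbitrary: p rule: nat_induct_at_least)
  case base
  then show ?case using base3 by simp
next
  case (Suc n)
  have front: "r \<in> CC (Suc n)" if r: "r \<in> permutations_of_set {1..Suc n}" "convex_perm r"
    "r ! 0 = Suc n" for r
  proof -
    have sr: "set r = {1..Suc n}" and dr: "distinct r" using r by (auto simp: permutations_of_set_def)
    have lr: "length r = Suc n" using distinct_card[OF dr] sr by simp
    then obtain x q where "r = x # q" by (cases r) auto
    then have rq: "r = Suc n # q" using r(3) by simp
    have lq: "length q = n" using lr rq by simp
    have dq: "distinct q" and nq: "Suc n \<notin> set q" using dr rq by auto
    have "insert (Suc n) (set q) = {1..Suc n}" using sr rq by simp
    then have "set q = {1..Suc n} - {Suc n}" using nq by (metis Diff_insert_absorb)
    also have "\<dots> = {1..n}" by auto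
    finally have "q \<in> permutations_of_set {1..n}" using dq by (simp add: permutations_of_set_def)
    moreover have c2: "convex_perm (Suc n # q)" using r(2) rq by simp
    moreover have l2: "2 \<le> length q" using lq Suc.hyps by simp
    ultimately have cq: "convex_perm q" and cc: "int (q!0) - int (Suc n) \<le> int (q!1) - int (q!0)"
      unfolding convex_Cons by blast+
    have "q \<in> CC n" by (rule Suc.IH) fact+
    then show ?thesis using step_front[OF Suc.hyps _ lq cc] rq by simp
  qed
  from max_end[OF Suc.prems] consider "p ! 0 = Suc n" | "p ! (Suc n - 1) = Suc n" by auto
  then show ?case
  proof cases
    case 1 show ?thesis by (rule front[OF Suc.prems(1,2) 1])
  next
    case 2
    have dp: "distinct p" and sp: "set p = {1..Suc n}" using Suc.prems by (auto simp: permutations_of_set_def)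
    have lp: "length p = Suc n" using distinct_card[OF dp] sp by simp
    have "rev p \<in> permutations_of_set {1..Suc n}" using dp sp by (simp add: permutations_of_set_def)
    moreover have "convex_perm (rev p)" using Suc.prems by (simp add: convex_rev)
    moreover have "rev p ! 0 = Suc n" using 2 lp by (simp add: rev_nth)
    ultimately have "rev p \<in> CC (Suc n)" by (rule front)
    then show ?thesis using CC_rev[of "rev p"] by simp
  qed
qed

theorem theorem4p4:
  fixes n :: nat and p :: "nat list"
  assumes "n \<ge> 3"
    and "p \<in> permutations_of_set {1..n}"
  shows "convex_perm p \<longleftrightarrow>
    (\<exists>q \<in> {perm_i n, perm_ii n, perm_iii n, Pi_star n}. p = q \<or> p = rev q)"
proof
  assume "convex_perm p"
  then have "p \<in> CC n" using fwd assms by blast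
  then show "\<exists>q \<in> {perm_i n, perm_ii n, perm_iii n, Pi_star n}. p = q \<or> p = rev q"
    unfolding CC_def C4_def by blast
next
  assume "\<exists>q \<in> {perm_i n, perm_ii n, perm_iii n, Pi_star n}. p = q \<or> p = rev q"
  then obtain q where q: "q \<in> {perm_i n, perm_ii n, perm_iii n, Pi_star n}" and pq: "p = q \<or> p = rev q"
    by blast
  have n12: "1 \<le> n" "2 \<le> n" using assms(1) by auto
  from q have cq: "convex_perm q"
  proof (elim insertE)
    assume "q = perm_i n" then show ?thesis by (simp add: conv_i)
  next
    assume "q = perm_ii n" then show ?thesis using conv_ii[OF n12(1)] by simp
  next
    assume "q = perm_iii n" then show ?thesis using conv_iii[OF n12(2)] by simp
  next
    assume "q = Pi_star n" then show ?thesis by (simp add: conv_Pi)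
  qed simp
  from pq show "convex_perm p"
  proof
    assume "p = q" then show ?thesis using cq by simp
  next
    assume "p = rev q" then show ?thesis using cq convex_rev by simp
  qed
qed

end
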